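(* Let $n=2^r$, $a\in\mathbb{Z}_{2n}^*$ and $b\in 2\mathbb{Z}_{2n}$. Then $\mathrm{SD}(n,R,T)\cong\mathrm{SD}(n,aR,b+aT)$ and $\mathrm{PSD}(n,R,T)\cong\mathrm{PSD}(n,R,n+T)$.
   Context: For a group $G$ and inverse-closed $S\subseteq G\setminus\{1\}$, $\mathrm{Cay}(G,S)$ has vertex set $G$, with $g,h$ adjacent iff $g^{-1}h\in S$. $\mathrm{SD}_n=\langle\rho,\tau\mid\rho^{2n}=\tau^2=1,\ \tau\rho\tau=\rho^{n-1}\rangle$ and $\mathrm{PSD}_n=\langle\rho,\tau\mid\rho^{2n}=\tau^2=1,\ \tau\rho\tau=\rho^{n+1}\rangle$. For $R=-R\subseteq\mathbb{Z}_{2n}\setminus\{0\}$ and $T=(n+1)T\subseteq\mathbb{Z}_{2n}$, $\mathrm{SD}(n,R,T)=\mathrm{Cay}(\mathrm{SD}_n,\{\rho^i:i\in R\}\cup\{\rho^j\tau:j\in T\})$; for $R=-R\subseteq\mathbb{Z}_{2n}\setminus\{0\}$ and $T=(n-1)T\subseteq\mathbb{Z}_{2n}$, $\mathrm{PSD}(n,R,T)=\mathrm{Cay}(\mathrm{PSD}_n,\{\rho^i:i\in R\}\cup\{\rho^j\tau:j\in T\})$. Here $cI=\{cx:x\in I\}$ and $c+I=\{c+x:x\in I\}$ for $I\subseteq\mathbb{Z}_{2n}$, and $\mathbb{Z}_{2n}^*$ is the unit group of $\mathbb{Z}_{2n}$. *)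

theory Defs
  imports "HOL-Algebra.Group" "HOL-Computational_Algebra.Primes"
begin

text \<open>Concrete model of the group generated by rho, tau with rho^(2n) = tau^2 = 1 and
  tau rho tau = rho^k (k^2 = 1 mod 2n): the element (i,e) with 0 <= i < 2n, e in {0,1}
  stands for rho^i tau^e, and (rho^i tau^e)(rho^j tau^f) = rho^(i + k^e j) tau^(e+f).\<close>

definition rt_group :: "nat \<Rightarrow> int \<Rightarrow> (int \<times> int) monoid" where
  "rt_group n k = \<lparr> carrier = {0..<2 * int n} \<times> {0, 1},
     monoid.mult = (\<lambda>x y. ((fst x + k ^ nat (snd x) * fst y) mod (2 * int n), (snd x + snd y) mod 2)),
     one = (0, 0) \<rparr>"

definition SD_group :: "nat \<Rightarrow> (int \<times> int) monoid" where
  "SD_group n = rt_group n (int n - 1)"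

definition PSD_group :: "nat \<Rightarrow> (int \<times> int) monoid" where
  "PSD_group n = rt_group n (int n + 1)"

text \<open>Subsets of Z_(2n) are represented as sets of integers in {0..<2n}.\<close>

definition zscale :: "nat \<Rightarrow> int \<Rightarrow> int set \<Rightarrow> int set" where
  "zscale n c I = (\<lambda>x. (c * x) mod (2 * int n)) ` I"

definition zshift :: "nat \<Rightarrow> int \<Rightarrow> int set \<Rightarrow> int set" where
  "zshift n c I = (\<lambda>x. (c + x) mod (2 * int n)) ` I"

definition conn_set :: "int set \<Rightarrow> int set \<Rightarrow> (int \<times> int) set" where
  "conn_set R T = {(i, 0) | i. i \<in> R} \<union> {(j, 1) | j. j \<in> T}"

definition cay_adj :: "('a, 'b) monoid_scheme \<Rightarrow> 'a set \<Rightarrow> 'a \<Rightarrow> 'a \<Rightarrow> bool" where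
  "cay_adj G S g h \<longleftrightarrow> g \<in> carrier G \<and> h \<in> carrier G \<and> inv\<^bsub>G\<^esub> g \<otimes>\<^bsub>G\<^esub> h \<in> S"

definition cay_iso :: "('a, 'b) monoid_scheme \<Rightarrow> 'a set \<Rightarrow> ('c, 'd) monoid_scheme \<Rightarrow> 'c set \<Rightarrow> bool" where
  "cay_iso G S H S' \<longleftrightarrow> (\<exists>f. bij_betw f (carrier G) (carrier H) \<and>
     (\<forall>x \<in> carrier G. \<forall>y \<in> carrier G. cay_adj G S x y \<longleftrightarrow> cay_adj H S' (f x) (f y)))"

definition SD_graph_iso :: "nat \<Rightarrow> int set \<Rightarrow> int set \<Rightarrow> int set \<Rightarrow> int set \<Rightarrow> bool" where
  "SD_graph_iso n R T R' T' = cay_iso (SD_group n) (conn_set R T) (SD_group n) (conn_set R' T')"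

definition PSD_graph_iso :: "nat \<Rightarrow> int set \<Rightarrow> int set \<Rightarrow> int set \<Rightarrow> int set \<Rightarrow> bool" where
  "PSD_graph_iso n R T R' T' = cay_iso (PSD_group n) (conn_set R T) (PSD_group n) (conn_set R' T')"

end

theory Submission
  imports Defs
begin


lemma rt_mod_helper:
  fixes m k i j l :: int
  assumes "k^2 mod m = 1"
  shows "(i + k*j + l) mod m = (i + k*j + k*(k*l)) mod m"
proof -
  have "(k*(k*l)) mod m = ((k^2 mod m) * l) mod m" by (simp add: power2_eq_square mod_mult_left_eq mult.assoc)
  then have "(k*(k*l)) mod m = l mod m" using assms by simp
  then show ?thesis by (metis mod_add_cong)
qed

lemma rt_group_group:
  fixes n :: nat and k :: int
  assumes n: "n > 0" and k: "k^2 mod (2 * int n) = 1"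
  shows "group (rt_group n k)"
proof (rule groupI)
  let ?m = "2 * int n"
  have m: "?m > 0" using n by simp
  show "\<one>\<^bsub>rt_group n k\<^esub> \<in> carrier (rt_group n k)" using m by (simp add: rt_group_def)
  show "\<And>x y. x \<in> carrier (rt_group n k) \<Longrightarrow> y \<in> carrier (rt_group n k) \<Longrightarrow> x \<otimes>\<^bsub>rt_group n k\<^esub> y \<in> carrier (rt_group n k)"
    using m by (auto simp: rt_group_def)
  show "\<And>x. x \<in> carrier (rt_group n k) \<Longrightarrow> \<one>\<^bsub>rt_group n k\<^esub> \<otimes>\<^bsub>rt_group n k\<^esub> x = x"
    by (auto simp: rt_group_def)
  show "\<And>x y z. x \<in> carrier (rt_group n k) \<Longrightarrow> y \<in> carrier (rt_group n k) \<Longrightarrow> z \<in> carrier (rt_group n k) \<Longrightarrow>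
           x \<otimes>\<^bsub>rt_group n k\<^esub> y \<otimes>\<^bsub>rt_group n k\<^esub> z = x \<otimes>\<^bsub>rt_group n k\<^esub> (y \<otimes>\<^bsub>rt_group n k\<^esub> z)"
  proof -
    fix x y z assume "x \<in> carrier (rt_group n k)" "y \<in> carrier (rt_group n k)" "z \<in> carrier (rt_group n k)"
    then obtain i e j f l g where xyz: "x = (i,e)" "y = (j,f)" "z = (l,g)" "e \<in> {0,1}" "f \<in> {0,1}" "g \<in> {0,1}"
      by (auto simp: rt_group_def)
    have A: "((i + k ^ nat e * j) mod ?m + k ^ nat ((e + f) mod 2) * l) mod ?m
           = (i + k ^ nat e * ((j + k ^ nat f * l) mod ?m)) mod ?m"
    proof -
      have L: "((i + k ^ nat e * j) mod ?m + k ^ nat ((e + f) mod 2) * l) mod ?m = (i + k ^ nat e * j + k ^ nat ((e + f) mod 2) * l) mod ?m"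
        by (simp add: mod_add_left_eq)
      have R: "(i + k ^ nat e * ((j + k ^ nat f * l) mod ?m)) mod ?m = (i + k ^ nat e * (j + k ^ nat f * l)) mod ?m"
        by (metis mod_add_right_eq mod_mult_right_eq)
      show ?thesis unfolding L R using xyz(4,5) rt_mod_helper[OF k, of i j l]
        by (auto simp: algebra_simps)
    qed
    show "x \<otimes>\<^bsub>rt_group n k\<^esub> y \<otimes>\<^bsub>rt_group n k\<^esub> z = x \<otimes>\<^bsub>rt_group n k\<^esub> (y \<otimes>\<^bsub>rt_group n k\<^esub> z)"
      using A xyz by (auto simp: rt_group_def mod_add_left_eq mod_add_right_eq)
  qed
  show "\<And>x. x \<in> carrier (rt_group n k) \<Longrightarrow> \<exists>y\<in>carrier (rt_group n k). y \<otimes>\<^bsub>rt_group n k\<^esub> x = \<one>\<^bsub>rt_group n k\<^esub>"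
  proof -
    fix x assume "x \<in> carrier (rt_group n k)"
    then obtain i e where x: "x = (i,e)" "e \<in> {0,1}" by (auto simp: rt_group_def)
    show "\<exists>y\<in>carrier (rt_group n k). y \<otimes>\<^bsub>rt_group n k\<^esub> x = \<one>\<^bsub>rt_group n k\<^esub>"
    proof (cases "e = 0")
      case True
      then show ?thesis using x m
        by (intro bexI[of _ "((- i) mod ?m, 0)"]) (auto simp: rt_group_def mod_add_left_eq)
    next
      case False
      then have "e = 1" using x by auto
      then show ?thesis using x m
        by (intro bexI[of _ "((- k * i) mod ?m, 1)"]) (auto simp: rt_group_def mod_add_left_eq)
    qed
  qed
qed


lemma cay_iso_aut:
  assumes G: "group G" and h: "f \<in> hom G G" and bij: "bij_betw f (carrier G) (carrier G)"
    and S: "S \<subseteq> carrier G" and S': "S' = f ` S"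
  shows "cay_iso G S G S'"
  unfolding cay_iso_def
proof (intro exI conjI ballI)
  show "bij_betw f (carrier G) (carrier G)" by fact
  interpret group_hom G G f using G h by (simp add: group_hom_def group_hom_axioms_def)
  have inj: "inj_on f (carrier G)" using bij by (simp add: bij_betw_def)
  fix x y assume x: "x \<in> carrier G" and y: "y \<in> carrier G"
  have fx: "f x \<in> carrier G" "f y \<in> carrier G" using x y by auto
  have e: "f (inv\<^bsub>G\<^esub> x \<otimes>\<^bsub>G\<^esub> y) = inv\<^bsub>G\<^esub> (f x) \<otimes>\<^bsub>G\<^esub> f y"
    using x y by simp
  have c: "inv\<^bsub>G\<^esub> x \<otimes>\<^bsub>G\<^esub> y \<in> carrier G" using x y by simp
  have "(inv\<^bsub>G\<^esub> x \<otimes>\<^bsub>G\<^esub> y \<in> S) = (f (inv\<^bsub>G\<^esub> x \<otimes>\<^bsub>G\<^esub> y) \<in> f ` S)"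
    using inj c S by (auto dest: inj_onD)
  then show "cay_adj G S x y = cay_adj G S' (f x) (f y)"
    unfolding cay_adj_def S' e using x y fx by simp
qed

lemma rt_hom:
  fixes n :: nat and k a b :: int
  assumes n: "n > 0" and kb: "(b * (1 + k)) mod (2 * int n) = 0"
  defines "f \<equiv> (\<lambda>(i::int, e::int). ((a * i + b * e) mod (2 * int n), e))"
  shows "f \<in> hom (rt_group n k) (rt_group n k)"
proof (rule homI)
  let ?m = "2 * int n"
  have m: "?m > 0" using n by simp
  show "\<And>x. x \<in> carrier (rt_group n k) \<Longrightarrow> f x \<in> carrier (rt_group n k)"
    using m by (auto simp: rt_group_def f_def)
  fix x y assume "x \<in> carrier (rt_group n k)" "y \<in> carrier (rt_group n k)"
  then obtain i e j g where xy: "x = (i,e)" "y = (j,g)" "e \<in> {0,1}" "g \<in> {0,1}"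
    by (auto simp: rt_group_def)
  have L: "(a * ((i + k ^ nat e * j) mod ?m) + b * ((e + g) mod 2)) mod ?m
        = (a * (i + k ^ nat e * j) + b * ((e + g) mod 2)) mod ?m"
    by (metis mod_add_left_eq mod_mult_right_eq)
  have R: "((a * i + b * e) mod ?m + k ^ nat e * ((a * j + b * g) mod ?m)) mod ?m
        = ((a * i + b * e) + k ^ nat e * (a * j + b * g)) mod ?m"
    by (metis mod_add_left_eq mod_add_right_eq mod_mult_right_eq)
  have kb': "(a * i + a * (k * j) + b + k * b + c) mod ?m = (a * i + a * (k * j) + c) mod ?m" for c
  proof -
    have "(a * i + a * (k * j) + b + k * b + c) = (a * i + a * (k * j) + c) + b * (1 + k)" by (simp add: algebra_simps)
    then show ?thesis using kb by (metis add.right_neutral mod_add_right_eq)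
  qed
  have "(a * ((i + k ^ nat e * j) mod ?m) + b * ((e + g) mod 2)) mod ?m
      = ((a * i + b * e) mod ?m + k ^ nat e * ((a * j + b * g) mod ?m)) mod ?m"
    unfolding L R using xy(3,4) kb'[of 0] by (auto simp: algebra_simps)
  then show "f (x \<otimes>\<^bsub>rt_group n k\<^esub> y) = f x \<otimes>\<^bsub>rt_group n k\<^esub> f y"
    using xy by (simp add: rt_group_def f_def)
qed

lemma rt_bij:
  fixes n :: nat and k a b :: int
  assumes n: "n > 0" and a: "coprime a (2 * int n)"
  defines "f \<equiv> (\<lambda>(i::int, e::int). ((a * i + b * e) mod (2 * int n), e))"
  shows "bij_betw f (carrier (rt_group n k)) (carrier (rt_group n k))"
proof -
  let ?m = "2 * int n"
  let ?C = "carrier (rt_group n k)"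
  have m: "?m > 0" using n by simp
  have inj: "inj_on f ?C"
  proof (rule inj_onI)
    fix x y assume "x \<in> ?C" "y \<in> ?C" and eq: "f x = f y"
    then obtain i e j g where xy: "x = (i,e)" "y = (j,g)" "0 \<le> i" "i < ?m" "0 \<le> j" "j < ?m"
      by (auto simp: rt_group_def)
    have eg: "e = g" using eq xy by (simp add: f_def)
    have "(a * i + b * e) mod ?m = (a * j + b * e) mod ?m" using eq xy eg by (simp add: f_def)
    then have "?m dvd (a * i + b * e) - (a * j + b * e)" by (simp add: mod_eq_dvd_iff)
    then have "?m dvd a * (i - j)" by (simp add: algebra_simps)
    then have "?m dvd (i - j)" using a by (metis coprime_commute coprime_dvd_mult_right_iff)
    then have "i mod ?m = j mod ?m" by (simp add: mod_eq_dvd_iff)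
    then have "i = j" using xy by simp
    then show "x = y" using xy eg by simp
  qed
  have sub: "f ` ?C \<subseteq> ?C" using m by (auto simp: rt_group_def f_def)
  have fin: "finite ?C" by (simp add: rt_group_def)
  have "f ` ?C = ?C" using endo_inj_surj[OF fin sub inj] .
  then show ?thesis using inj by (simp add: bij_betw_def)
qed

theorem lemma3p4:
  fixes r n :: nat and a b :: int and R T :: "int set"
  assumes "n = 2 ^ r" and "r \<ge> 1"
    and "a \<in> {0..<2 * int n}" and "coprime a (2 * int n)"
    and "b \<in> {0..<2 * int n}" and "even b"
    and "R \<subseteq> {0..<2 * int n}" and "0 \<notin> R" and "zscale n (-1) R = R"
    and "T \<subseteq> {0..<2 * int n}"
  shows "(zscale n (int n + 1) T = T \<longrightarrow>
           SD_graph_iso n R T (zscale n a R) (zshift n b (zscale n a T)))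
       \<and> (zscale n (int n - 1) T = T \<longrightarrow>
           PSD_graph_iso n R T R (zshift n (int n) T))"
proof -
  let ?m = "2 * int n"
  obtain q :: int where q: "int n = 2 * q" "q > 0"
  proof -
    have "n = 2 * 2 ^ (r - 1)" using assms(1,2) by (metis Suc_diff_le diff_Suc_1 power_Suc)
    then show ?thesis using that[of "2 ^ (r - 1)"] by simp
  qed
  have n0: "n > 0" using q by simp
  have S: "conn_set R T \<subseteq> carrier (rt_group n k)" for k
    using assms(7,10) by (auto simp: conn_set_def rt_group_def)
  have SD: "SD_graph_iso n R T (zscale n a R) (zshift n b (zscale n a T))"
  proof -
    let ?k = "int n - 1"
    have k2: "(int n - 1)^2 = ?m * (q - 1) + 1" using q by (simp add: power2_eq_square algebra_simps)
    have k: "?k^2 mod ?m = 1" unfolding k2 using q by simp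
    obtain c where c: "b = 2 * c" using assms(6) by blast
    have kb: "(b * (1 + ?k)) mod ?m = 0" using c by (simp add: algebra_simps)
    have G: "group (rt_group n ?k)" by (rule rt_group_group[OF n0 k])
    have img: "conn_set (zscale n a R) (zshift n b (zscale n a T))
       = (\<lambda>(i::int, e::int). ((a * i + b * e) mod (2 * int n), e)) ` conn_set R T"
      unfolding conn_set_def zscale_def zshift_def
      apply (auto simp: mod_add_right_eq add.commute image_iff)
      subgoal for x by (rule bexI[of _ "(x,0)"]) auto
      subgoal for x by (rule bexI[of _ "(x,1)"]) (auto simp: add.commute)
      done
    show ?thesis unfolding SD_graph_iso_def SD_group_def
      by (rule cay_iso_aut[OF G rt_hom[OF n0 kb] rt_bij[OF n0 assms(4)] S img])
  qed
  have PSD: "PSD_graph_iso n R T R (zshift n (int n) T)"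
  proof -
    let ?k = "int n + 1"
    have k2: "(int n + 1)^2 = ?m * (q + 1) + 1" using q by (simp add: power2_eq_square algebra_simps)
    have k: "?k^2 mod ?m = 1" unfolding k2 using q by simp
    have kb0: "int n * (1 + ?k) = ?m * (q + 1)" using q by (simp add: algebra_simps)
    have kb: "(int n * (1 + ?k)) mod ?m = 0" unfolding kb0 by simp
    have G: "group (rt_group n ?k)" by (rule rt_group_group[OF n0 k])
    have cop: "coprime (1::int) ?m" by simp
    have Rm: "i \<in> R \<Longrightarrow> i mod ?m = i" for i using assms(7) by auto
    have img: "conn_set R (zshift n (int n) T)
       = (\<lambda>(i::int, e::int). ((1 * i + int n * e) mod (2 * int n), e)) ` conn_set R T"
      unfolding conn_set_def zshift_def
      using Rm apply (auto simp: add.commute image_iff)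
      subgoal for x by (rule bexI[of _ "(x,0)"]) auto
      subgoal for x by (rule bexI[of _ "(x,1)"]) (auto simp: add.commute)
      done
    show ?thesis unfolding PSD_graph_iso_def PSD_group_def
      by (rule cay_iso_aut[OF G rt_hom[OF n0 kb] rt_bij[OF n0 cop] S img])
  qed
  show ?thesis using SD PSD by simp
qed

end
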